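(* For all real $x,y$, $$e^{xy}=\sum_{m,n=0}^{\infty}(-1)^n H_{m,n}(x)\frac{y^{m+n}}{m!\,n!}.$$
   Context: For integers $m,n\ge 0$, the two-index Hermite polynomial is $H_{m,n}(x)=\left(-\frac{d}{dx}+2x\right)^m(x^n)$, i.e. the operator $f\mapsto -f'+2xf$ applied $m$ times to $x^n$. *)

theory Defs
  imports "HOL-Analysis.Analysis" "HOL-Computational_Algebra.Polynomial"
begin

definition hermite_op :: "real poly \<Rightarrow> real poly" where
  "hermite_op p = - pderiv p + [:0, 2:] * p"

definition H2 :: "nat \<Rightarrow> nat \<Rightarrow> real poly" where
  "H2 m n = (hermite_op ^^ m) (monom 1 n)"

end

theory Submission
  imports Defs "HOL-Analysis.Analysis"
begin

lemma hop_add: "hermite_op (p + q) = hermite_op p + hermite_op q"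
  by (simp add: hermite_op_def pderiv_add algebra_simps smult_add_right)
lemma hop_diff: "hermite_op (p - q) = hermite_op p - hermite_op q"
  by (simp add: hermite_op_def pderiv_diff algebra_simps smult_diff_right)
lemma hop_smult: "hermite_op (smult c p) = smult c (hermite_op p)"
  by (simp add: hermite_op_def pderiv_smult smult_add_right smult_diff_right)
lemma hop_0: "hermite_op 0 = 0"
  by (simp add: hermite_op_def)
lemma hop_x: "hermite_op (pCons 0 p) = pCons 0 (hermite_op p) - p"
  by (simp add: hermite_op_def pderiv_mult pderiv_pCons algebra_simps)
lemma hop_pow_0: "(hermite_op ^^ m) 0 = 0"
  by (induction m) (auto simp: hop_0)

lemma hop_pow_x: "(hermite_op ^^ m) ([:0,1:] * p) = [:0,1:] * (hermite_op ^^ m) p - smult (of_nat m) ((hermite_op ^^ (m-1)) p)"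
proof (induction m)
  case 0 then show ?case by simp
next
  case (Suc m)
  show ?case
  proof (cases m)
    case 0 then show ?thesis by (simp add: hop_x)
  next
    case (Suc k)
    have "(hermite_op ^^ Suc m) ([:0,1:] * p) = hermite_op ([:0,1:] * (hermite_op ^^ m) p - smult (of_nat m) ((hermite_op ^^ (m-1)) p))"
      using Suc.IH by simp
    also have "\<dots> = [:0,1:] * (hermite_op ^^ Suc m) p - (hermite_op ^^ m) p - smult (of_nat m) ((hermite_op ^^ m) p)"
      using Suc by (simp add: hop_diff hop_x hop_smult)
    also have "\<dots> = [:0,1:] * (hermite_op ^^ Suc m) p - smult (of_nat (Suc m)) ((hermite_op ^^ (Suc m - 1)) p)"
      by (simp add: algebra_simps smult_add_left)
    finally show ?thesis .
  qed
qed

lemma pderiv_hop: "pderiv (hermite_op p) = hermite_op (pderiv p) + smult 2 p"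
  by (simp add: hermite_op_def pderiv_mult pderiv_pCons pderiv_add pderiv_minus pderiv_diff pderiv_smult algebra_simps)

lemma pderiv_hop_pow: "pderiv ((hermite_op ^^ m) p) = (hermite_op ^^ m) (pderiv p) + smult (2 * of_nat m) ((hermite_op ^^ (m-1)) p)"
proof (induction m)
  case 0 then show ?case by simp
next
  case (Suc m)
  show ?case
  proof (cases m)
    case 0 then show ?thesis by (simp add: pderiv_hop)
  next
    case (Suc k)
    have "pderiv ((hermite_op ^^ Suc m) p) = hermite_op (pderiv ((hermite_op ^^ m) p)) + smult 2 ((hermite_op ^^ m) p)"
      by (simp add: pderiv_hop)
    also have "\<dots> = (hermite_op ^^ Suc m) (pderiv p) + smult (2 * of_nat m) ((hermite_op ^^ m) p) + smult 2 ((hermite_op ^^ m) p)"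
      using Suc.IH Suc by (simp add: hop_add hop_smult)
    also have "\<dots> = (hermite_op ^^ Suc m) (pderiv p) + smult (2 * of_nat (Suc m)) ((hermite_op ^^ (Suc m - 1)) p)"
      by (simp add: algebra_simps smult_add_left)
    finally show ?thesis .
  qed
qed

lemma H2_rec_n: "poly (H2 m (Suc n)) x = x * poly (H2 m n) x - of_nat m * poly (H2 (m-1) n) x"
proof -
  have "monom (1::real) (Suc n) = [:0,1:] * monom 1 n"
    by (simp add: monom_Suc)
  then show ?thesis unfolding H2_def using hop_pow_x[of m "monom 1 n"] by simp
qed

lemma H2_rec_m: "poly (H2 (Suc k) 0) x = 2 * x * poly (H2 k 0) x - 2 * of_nat k * poly (H2 (k-1) 0) x"
proof -
  have "pderiv (H2 k 0) = smult (2 * of_nat k) (H2 (k-1) 0)"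
    unfolding H2_def by (simp add: pderiv_hop_pow hop_pow_0)
  then show ?thesis unfolding H2_def by (simp add: hermite_op_def algebra_simps)
qed

lemma fact_cancel: "(of_nat (Suc t)::real) * (a / (b * fact (Suc t))) = a / (b * fact t)"
proof -
  have "(of_nat (Suc t)::real) \<noteq> 0" by simp
  then show ?thesis unfolding fact_Suc by (simp add: field_simps del: of_nat_Suc)
qed

definition Dc :: "real \<Rightarrow> nat \<Rightarrow> nat \<Rightarrow> real" where
  "Dc x k i = (if 2*i \<le> k then (-1)^i * (2*x)^(k-2*i) / (fact i * fact (k-2*i)) else 0)"
definition DD :: "real \<Rightarrow> nat \<Rightarrow> real" where
  "DD x k = (\<Sum>i\<le>k. Dc x k i)"

lemma Dc_rec1: "of_nat (Suc k - 2*i) * Dc x (Suc k) i = 2*x * Dc x k i"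
proof (cases "2*i \<le> k")
  case True
  then obtain t where t: "k - 2*i = t" "Suc k - 2*i = Suc t" by (metis Suc_diff_le)
  have "of_nat (Suc t) * Dc x (Suc k) i = of_nat (Suc t) * (((-1)^i * (2*x) * (2*x)^t) / (fact i * fact (Suc t)))"
    using True t by (simp add: Dc_def mult.assoc del: of_nat_Suc fact_Suc)
  also have "\<dots> = 2*x * Dc x k i" 
    unfolding fact_cancel using True t by (simp add: Dc_def)
  finally show ?thesis using t by simp
next
  case False
  then show ?thesis by (auto simp: Dc_def)
qed

lemma Dc_rec2: "of_nat (2*i) * Dc x (Suc (Suc k)) i = (if i = 0 then 0 else -2 * Dc x k (i-1))"
proof (cases i)
  case 0 then show ?thesis by simp
next
  case (Suc j)
  have e: "Suc (Suc k) - 2 * Suc j = k - 2*j" by simp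
  have "of_nat (2*i) * Dc x (Suc (Suc k)) i = 2 * (of_nat (Suc j) * (if 2*j \<le> k then ((-1) * ((-1)^j * (2*x)^(k-2*j))) / (fact (k-2*j) * fact (Suc j)) else 0))"
    using Suc unfolding of_nat_mult by (simp add: Dc_def e mult_ac del: of_nat_Suc fact_Suc)
  also have "\<dots> = -2 * Dc x k (i-1)"
    using Suc by (simp add: Dc_def fact_cancel mult_ac)
  finally show ?thesis using Suc by simp
qed

lemma DD_0: "DD x 0 = 1" by (simp add: DD_def Dc_def)
lemma DD_1: "DD x 1 = 2*x" by (simp add: DD_def Dc_def)

lemma DD_rec: "of_nat (Suc (Suc k)) * DD x (Suc (Suc k)) = 2*x * DD x (Suc k) - 2 * DD x k"
proof -
  let ?n = "Suc (Suc k)"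
  have "of_nat ?n * DD x ?n = (\<Sum>i\<le>?n. of_nat (?n - 2*i) * Dc x ?n i + of_nat (2*i) * Dc x ?n i)"
    unfolding DD_def sum_distrib_left
  proof (rule sum.cong[OF refl])
    fix i
    show "of_nat ?n * Dc x ?n i = of_nat (?n - 2*i) * Dc x ?n i + of_nat (2*i) * Dc x ?n i"
    proof (cases "2*i \<le> ?n")
      case True
      then have "(of_nat ?n::real) = of_nat (?n - 2*i) + of_nat (2*i)" by (simp only: of_nat_add[symmetric])
      then show ?thesis by (simp only: distrib_right[symmetric])
    next
      case False
      then show ?thesis by (simp add: Dc_def)
    qed
  qed
  also have "\<dots> = (\<Sum>i\<le>?n. 2*x * Dc x (Suc k) i) + (\<Sum>i\<le>?n. (if i = 0 then 0 else -2 * Dc x k (i-1)))"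
    by (simp only: sum.distrib Dc_rec1 Dc_rec2)
  also have "(\<Sum>i\<le>?n. 2*x * Dc x (Suc k) i) = 2*x * DD x (Suc k)"
  proof -
    have z1: "Dc x (Suc k) (Suc (Suc k)) = 0" by (simp add: Dc_def)
    show ?thesis unfolding sum.atMost_Suc[of _ "Suc k"] z1 DD_def sum_distrib_left by simp
  qed
  also have "(\<Sum>i\<le>?n. (if i = 0 then 0 else -2 * Dc x k (i-1))) = -2 * DD x k"
  proof -
    have z2: "Dc x k (Suc k) = 0" by (simp add: Dc_def)
    have "(\<Sum>i\<le>?n. (if i = 0 then 0 else -2 * Dc x k (i-1))) = (\<Sum>i\<le>Suc k. -2 * Dc x k i)"
      unfolding sum.atMost_Suc_shift by simp
    also have "\<dots> = -2 * DD x k"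
      unfolding sum.atMost_Suc[of _ k] z2 DD_def sum_distrib_left by simp
    finally show ?thesis .
  qed
  finally show ?thesis by simp
qed

lemma h_formula: "poly (H2 k 0) x = fact k * DD x k"
proof -
  have "poly (H2 k 0) x = fact k * DD x k \<and> poly (H2 (Suc k) 0) x = fact (Suc k) * DD x (Suc k)"
  proof (induction k)
    case 0
    have "poly (H2 1 0) x = 2 * x" using H2_rec_m[of 0 x] by (simp add: H2_def)
    then show ?case using DD_1[of x] by (simp add: H2_def DD_0)
  next
    case (Suc k)
    have "poly (H2 (Suc (Suc k)) 0) x = 2 * x * poly (H2 (Suc k) 0) x - 2 * of_nat (Suc k) * poly (H2 k 0) x"
      using H2_rec_m[of "Suc k" x] by simp
    also have "\<dots> = fact (Suc k) * (2 * x * DD x (Suc k) - 2 * DD x k)"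
      using Suc.IH by (simp add: algebra_simps del: of_nat_Suc)
    also have "\<dots> = fact (Suc (Suc k)) * DD x (Suc (Suc k))"
      unfolding DD_rec[symmetric] fact_Suc[of "Suc k"] by (simp add: algebra_simps del: of_nat_Suc fact_Suc)
    finally show ?case using Suc.IH by simp
  qed
  then show ?thesis by simp
qed

definition Ec :: "real \<Rightarrow> nat \<Rightarrow> nat \<Rightarrow> nat \<Rightarrow> real" where
  "Ec x m n j = (if j \<le> m \<and> j \<le> n then (-1)^j * x^(n-j) * DD x (m-j) / (fact j * fact (n-j)) else 0)"
definition EE :: "real \<Rightarrow> nat \<Rightarrow> nat \<Rightarrow> real" where
  "EE x m n = (\<Sum>j\<le>n. Ec x m n j)"

lemma Ec_rec1: "of_nat (Suc n - j) * Ec x m (Suc n) j = x * Ec x m n j"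
proof (cases "j \<le> n")
  case True
  then obtain t where t: "n - j = t" "Suc n - j = Suc t" by (metis Suc_diff_le)
  have "of_nat (Suc t) * Ec x m (Suc n) j = of_nat (Suc t) * (if j \<le> m then (x * ((-1)^j * x^t * DD x (m-j))) / (fact j * fact (Suc t)) else 0)"
    using True t by (simp add: Ec_def mult_ac del: of_nat_Suc fact_Suc)
  also have "\<dots> = x * Ec x m n j" 
    using True t by (simp add: Ec_def fact_cancel)
  finally show ?thesis using t by simp
next
  case False
  then show ?thesis by (auto simp: Ec_def)
qed

lemma Ec_rec2: "of_nat j * Ec x m (Suc n) j = (if j = 0 \<or> m = 0 then 0 else - Ec x (m-1) n (j-1))"
proof (cases "j = 0 \<or> m = 0")
  case True then show ?thesis by (auto simp: Ec_def)
next
  case False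
  then obtain i l where il: "j = Suc i" "m = Suc l" by (metis not0_implies_Suc)
  have "of_nat j * Ec x m (Suc n) j = of_nat (Suc i) * (if i \<le> l \<and> i \<le> n then (-((-1)^i * x^(n-i) * DD x (l-i))) / (fact (n-i) * fact (Suc i)) else 0)"
    using il by (simp add: Ec_def mult_ac del: of_nat_Suc fact_Suc)
  also have "\<dots> = - Ec x (m-1) n (j-1)"
    using il by (simp add: Ec_def fact_cancel mult_ac)
  finally show ?thesis using False by simp
qed

lemma EE_rec: "of_nat (Suc n) * EE x m (Suc n) = x * EE x m n - (if m = 0 then 0 else EE x (m-1) n)"
proof -
  have "of_nat (Suc n) * EE x m (Suc n) = (\<Sum>j\<le>Suc n. of_nat (Suc n - j) * Ec x m (Suc n) j + of_nat j * Ec x m (Suc n) j)"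
    unfolding EE_def sum_distrib_left
  proof (rule sum.cong[OF refl])
    fix j assume "j \<in> {..Suc n}"
    then have "(of_nat (Suc n)::real) = of_nat (Suc n - j) + of_nat j" by (simp only: of_nat_add[symmetric]) simp
    then show "of_nat (Suc n) * Ec x m (Suc n) j = of_nat (Suc n - j) * Ec x m (Suc n) j + of_nat j * Ec x m (Suc n) j"
      by (simp only: distrib_right[symmetric])
  qed
  also have "\<dots> = (\<Sum>j\<le>Suc n. x * Ec x m n j) + (\<Sum>j\<le>Suc n. (if j = 0 \<or> m = 0 then 0 else - Ec x (m-1) n (j-1)))"
    by (simp only: sum.distrib Ec_rec1 Ec_rec2)
  also have "(\<Sum>j\<le>Suc n. x * Ec x m n j) = x * EE x m n"
  proof -
    have z1: "Ec x m n (Suc n) = 0" by (simp add: Ec_def)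
    show ?thesis unfolding sum.atMost_Suc[of _ n] z1 EE_def sum_distrib_left by simp
  qed
  also have "(\<Sum>j\<le>Suc n. (if j = 0 \<or> m = 0 then 0 else - Ec x (m-1) n (j-1))) = - (if m = 0 then 0 else EE x (m-1) n)"
    unfolding sum.atMost_Suc_shift EE_def by (simp add: sum_negf)
  finally show ?thesis by simp
qed

lemma H_formula: "poly (H2 m n) x = fact m * fact n * EE x m n"
proof (induction n arbitrary: m)
  case 0
  then show ?case by (simp add: EE_def Ec_def h_formula)
next
  case (Suc n)
  have "poly (H2 m (Suc n)) x = x * poly (H2 m n) x - of_nat m * poly (H2 (m-1) n) x"
    by (rule H2_rec_n)
  also have "\<dots> = fact m * fact n * (x * EE x m n - (if m = 0 then 0 else EE x (m-1) n))"
  proof (cases m)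
    case 0 then show ?thesis using Suc.IH by (simp add: algebra_simps)
  next
    case (Suc l)
    then show ?thesis using Suc.IH[of m] Suc.IH[of l] by (simp add: algebra_simps del: of_nat_Suc)
  qed
  also have "\<dots> = fact m * fact (Suc n) * EE x m (Suc n)"
    unfolding EE_rec[symmetric] by (simp add: algebra_simps del: of_nat_Suc)
  finally show ?case .
qed


lemma exp_has_sum: "((\<lambda>n. z^n / fact n) has_sum exp z) (UNIV :: nat set)" for z :: real
proof (rule norm_summable_imp_has_sum)
  show "summable (\<lambda>n. norm (z^n / fact n))"
    using summable_exp[of "\<bar>z\<bar>"] by (simp add: abs_mult power_abs divide_inverse mult.commute)
  show "(\<lambda>n. z^n / fact n) sums exp z"
    using exp_converges[of z] by (simp add: divide_inverse mult.commute)
qed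

lemma has_sum_prod:
  fixes f :: "'a \<Rightarrow> real" and g :: "'b \<Rightarrow> real"
  assumes f: "(f has_sum a) UNIV" and g: "(g has_sum b) UNIV"
  shows "((\<lambda>(p,q). f p * g q) has_sum (a*b)) UNIV"
proof -
  have fa: "(\<lambda>x. norm (f x)) summable_on UNIV" and ga: "(\<lambda>x. norm (g x)) summable_on UNIV"
    using f g summable_on_iff_abs_summable_on_real has_sum_imp_summable by blast+
  have "(\<lambda>x. norm ((\<lambda>(p,q). f p * g q) x)) summable_on Sigma UNIV (\<lambda>_. UNIV)"
  proof (rule Infinite_Sum.abs_summable_on_Sigma_iff[THEN iffD2], intro conjI ballI)
    fix p :: 'a
    show "(\<lambda>x. norm ((\<lambda>q. (\<lambda>(p,q). f p * g q) (p, q)) x)) summable_on UNIV"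
      using summable_on_cmult_right[OF ga, of "\<bar>f p\<bar>"] by (simp add: abs_mult)
  next
    have "(\<lambda>p. \<bar>f p\<bar> * (\<Sum>\<^sub>\<infinity>q. \<bar>g q\<bar>)) summable_on UNIV"
      using summable_on_cmult_left[OF fa] by simp
    moreover have "(\<Sum>\<^sub>\<infinity>q. norm ((\<lambda>(p,q). f p * g q) (p, q))) = \<bar>f p\<bar> * (\<Sum>\<^sub>\<infinity>q. \<bar>g q\<bar>)" for p
      by (simp add: abs_mult infsum_cmult_right')
    ultimately show "(\<lambda>x. norm ((\<lambda>p. \<Sum>\<^sub>\<infinity>q. norm ((\<lambda>(p,q). f p * g q) (p, q))) x)) summable_on UNIV"
      by (simp add: infsum_nonneg)
  qed
  then have s: "(\<lambda>(p,q). f p * g q) summable_on Sigma UNIV (\<lambda>_. UNIV)"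
    by (rule abs_summable_summable)
  have "((\<lambda>(p,q). f p * g q) has_sum (a*b)) (Sigma UNIV (\<lambda>_. UNIV))"
  proof (rule has_sum_SigmaI[OF _ _ s])
    show "((\<lambda>q. (\<lambda>(p,q). f p * g q) (p, q)) has_sum f p * b) UNIV" for p
      using has_sum_cmult_right[OF g] by simp
    show "((\<lambda>p. f p * b) has_sum a * b) UNIV"
      using has_sum_cmult_left[OF f] by simp
  qed
  then show ?thesis by simp
qed

lemma has_sum_group:
  fixes f :: "'a \<Rightarrow> real" and \<pi> :: "'a \<Rightarrow> 'b"
  assumes f: "(f has_sum S) UNIV" and fin: "\<And>b. finite {a. \<pi> a = b}"
  shows "((\<lambda>b. \<Sum>a\<in>{a. \<pi> a = b}. f a) has_sum S) UNIV"
proof -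
  have "bij_betw snd (Sigma UNIV (\<lambda>b. {a. \<pi> a = b})) UNIV"
    by (rule bij_betwI[of _ _ _ "\<lambda>a. (\<pi> a, a)"]) auto
  then have "((\<lambda>p. f (snd p)) has_sum S) (Sigma UNIV (\<lambda>b. {a. \<pi> a = b}))"
    using has_sum_reindex_bij_betw f by blast
  then show ?thesis
    by (rule has_sum_SigmaD) (use fin in auto)
qed


lemma stageA: "((\<lambda>k. DD x k * (y::real)^k) has_sum (exp (2*x*y) * exp (-(y^2)))) (UNIV :: nat set)"
proof -
  define F where "F = (\<lambda>(b::nat,i::nat). (2*x*y)^b / fact b * ((-(y^2))^i / fact i))"
  have F: "(F has_sum (exp (2*x*y) * exp (-(y^2)))) UNIV"
    unfolding F_def by (rule has_sum_prod[OF exp_has_sum exp_has_sum])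
  have fin: "finite {p. (\<lambda>(b,i). b + 2*i) p = k}" for k :: nat
    by (rule finite_subset[of _ "{..k} \<times> {..k}"]) auto
  have eq: "(\<Sum>p\<in>{p. (\<lambda>(b,i). b + 2*i) p = k}. F p) = DD x k * y^k" for k :: nat
  proof -
    have "(\<Sum>p\<in>{p. (\<lambda>(b,i). b + 2*i) p = k}. F p) = (\<Sum>i\<in>{i. 2*i \<le> k}. F (k - 2*i, i))"
      by (rule sum.reindex_bij_witness[of _ "\<lambda>i. (k - 2*i, i)" snd]) auto
    also have "\<dots> = (\<Sum>i\<in>{i. 2*i \<le> k}. Dc x k i * y^k)"
    proof (rule sum.cong[OF refl])
      fix i assume "i \<in> {i. 2*i \<le> k}"
      then obtain t where t: "k = t + 2*i" by (metis le_add_diff_inverse2 mem_Collect_eq)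
      have s2: "(y^2)^i = (y^i)^2" by (simp flip: power_mult add: mult.commute)
      show "F (k - 2*i, i) = Dc x k i * y^k"
        unfolding F_def Dc_def t using s2 by (simp add: power_add power_mult power_mult_distrib power_minus[of "y^2"] field_simps)
    qed
    also have "\<dots> = (\<Sum>i\<le>k. Dc x k i * y^k)"
      by (rule sum.mono_neutral_left) (auto simp: Dc_def)
    finally show ?thesis by (simp add: DD_def sum_distrib_right)
  qed
  show ?thesis using has_sum_group[OF F fin] eq by simp
qed

theorem mainTheorem13:
  fixes x y :: real
  shows "((\<lambda>(m, n). (-1) ^ n * poly (H2 m n) x * y ^ (m + n) / (fact m * fact n))
           has_sum exp (x * y)) (UNIV :: (nat \<times> nat) set)"
proof -
  define F where "F = (\<lambda>(a::nat,(k::nat,j::nat)). (-(x*y))^a / fact a * (DD x k * y^k * ((y^2)^j / fact j)))"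
  have "(F has_sum (exp (-(x*y)) * ((exp (2*x*y) * exp (-(y^2))) * exp (y^2)))) UNIV"
    unfolding F_def using has_sum_prod[OF exp_has_sum has_sum_prod[OF stageA exp_has_sum]]
    by (simp add: case_prod_unfold)
  moreover have "exp (-(x*y)) * ((exp (2*x*y) * exp (-(y^2))) * exp (y^2)) = exp (x*y)"
    by (simp flip: exp_add)
  ultimately have F: "(F has_sum exp (x*y)) UNIV" by simp
  define \<pi> where "\<pi> = (\<lambda>(a::nat,(k::nat,j::nat)). (k+j, a+j))"
  have fin: "finite {p. \<pi> p = mn}" for mn
    by (rule finite_subset[of _ "{..snd mn} \<times> ({..fst mn} \<times> {..fst mn})"]) (auto simp: \<pi>_def)
  have eq: "(\<Sum>p\<in>{p. \<pi> p = (m,n)}. F p) = (-1) ^ n * poly (H2 m n) x * y ^ (m + n) / (fact m * fact n)" for m n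
  proof -
    have "(\<Sum>p\<in>{p. \<pi> p = (m,n)}. F p) = (\<Sum>j\<in>{j. j \<le> m \<and> j \<le> n}. F (n - j, (m - j, j)))"
      by (rule sum.reindex_bij_witness[of _ "\<lambda>j. (n - j, (m - j, j))" "\<lambda>p. snd (snd p)"]) (auto simp: \<pi>_def)
    also have "\<dots> = (\<Sum>j\<in>{j. j \<le> m \<and> j \<le> n}. (-1)^n * Ec x m n j * y^(m+n))"
    proof (rule sum.cong[OF refl])
      fix j assume "j \<in> {j. j \<le> m \<and> j \<le> n}"
      then obtain a l where al: "n = a + j" "m = l + j" by (metis le_add_diff_inverse2 mem_Collect_eq)
      have s: "(-1::real)^(a+j) * (-1)^j = (-1)^a" by (simp add: power_add mult.assoc flip: power_add[of "-1::real" j j] mult_2[symmetric])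
      have s2: "(y^2)^j = y^j * y^j" by (simp add: power2_eq_square power_mult_distrib)
      show "F (n - j, (m - j, j)) = (-1)^n * Ec x m n j * y^(m+n)"
        unfolding F_def Ec_def al using s s2
        by (simp add: power_add power_mult power_mult_distrib power_minus[of "x*y"] field_simps)
    qed
    also have "\<dots> = (\<Sum>j\<le>n. (-1)^n * Ec x m n j * y^(m+n))"
      by (rule sum.mono_neutral_left) (auto simp: Ec_def)
    also have "\<dots> = (-1)^n * EE x m n * y^(m+n)"
      by (simp add: EE_def sum_distrib_left sum_distrib_right)
    also have "\<dots> = (-1) ^ n * poly (H2 m n) x * y ^ (m + n) / (fact m * fact n)"
      by (simp add: H_formula)
    finally show ?thesis .
  qed
  have "((\<lambda>mn. \<Sum>p\<in>{p. \<pi> p = mn}. F p) has_sum exp (x*y)) UNIV"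
    by (rule has_sum_group[OF F fin])
  then show ?thesis
    by (subst has_sum_cong[where g="\<lambda>mn. \<Sum>p\<in>{p. \<pi> p = mn}. F p"]) (auto simp: eq)
qed

end
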